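(* Let $m\geq 2$ be an integer. There exists $\bar\varepsilon_m>0$ such that, if the micro RKC method uses a damping parameter $\varepsilon_m\in[0,\bar\varepsilon_m]$, the following holds. Let $\lambda\leq 0$, $\zeta<0$, $\alpha_m=P_m''(0)$, and let $s$, $\tau>0$, $\eta>0$ satisfy $$(1+\alpha_m)\,\tau|\zeta|\leq \tilde\beta_s s^2=\ell_s,\qquad \eta|\lambda|\leq \ell_m^{\varepsilon_m},\qquad \eta\geq\frac{2\tau(1+\alpha_m)}{\alpha_m\ell_s}.$$ Then the mROCK2 method applied with macro-step $\tau$ and micro-step $\eta$ to the scalar test equation $\dot y=\lambda y+\zeta y$ (with $f_F(y)=\lambda y$, $f_S(y)=\zeta y$) satisfies $y_{n+1}=R_{s,m}(\lambda,\zeta,\tau,\eta)\,y_n$ with $|R_{s,m}(\lambda,\zeta,\tau,\eta)|\leq 1$, i.e. the scheme is stable.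
   Context: RKC method (micro method). For damping $\varepsilon\geq 0$ and $m$ stages, let $T_j$ be the Chebyshev polynomials ($T_0=1$, $T_1(x)=x$, $T_j=2xT_{j-1}-T_{j-2}$), $\omega_0=1+\varepsilon/m^2$, $\omega_1=T_m(\omega_0)/T_m'(\omega_0)$, $b_j=1/T_j(\omega_0)$. One step of size $h$ for $\dot u=g(u)$ from $u_0$: $k_0=u_0$, $k_1=k_0+\frac{\omega_1}{\omega_0}h\,g(k_0)$, $k_j=\nu_jk_{j-1}+\kappa_jk_{j-2}+\mu_jh\,g(k_{j-1})$ for $j=2,\dots,m$, with $\mu_j=2\omega_1b_j/b_{j-1}$, $\nu_j=2\omega_0b_j/b_{j-1}$, $\kappa_j=-b_j/b_{j-2}$; the result is $k_m$. Its stability polynomial is $P_m(z)=b_mT_m(\omega_0+\omega_1z)$, which satisfies $|P_m(z)|\leq 1$ on $[-\ell_m^{\varepsilon},0]$ with $\ell_m^\varepsilon=2\omega_0/\omega_1$. Set $\Phi_m(z)=(P_m(z)-1)/z$, $\Phi_m(0)=1$. ROCK2 method (macro method): an explicit $s$-stage Runge–Kutta method whose application to $\dot y=\kappa y$ with step $\tau$ gives $y_{n+1}=R_s(\tau\kappa)y_n$ for a real polynomial $R_s$ with $|R_s(z)|\leq 1$ for all $z\in[-\ell_s,0]$, where $\ell_s=\tilde\beta_s s^2$ ($\tilde\beta_s>0$ is the ROCK2 stability constant). mROCK2 step for $\dot y=f_F(y)+f_S(y)$: define the numerical averaged force $\bar f_{\eta,2}(y)$ by (i) $u_\eta$ = one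 RKC step of size $\eta$ for $\dot u=f_F(u)+f_S(y)$, $u(0)=y$; (ii) $\bar f_{\eta,1}(y)=(u_\eta-y)/\eta$; (iii) $v_\eta$ = one RKC step of size $\eta$ for $\dot v=f_F\bigl(v-\frac{\alpha_m\eta}{2}\bar f_{\eta,1}(y)\bigr)+f_S(y)$, $v(0)=y$; (iv) $\bar f_{\eta,2}(y)=(v_\eta-y)/\eta$. Then $y_{n+1}$ is one ROCK2 step of size $\tau$ from $y_n$ for $\dot y=\bar f_{\eta,2}(y)$. $R_{s,m}(\lambda,\zeta,\tau,\eta)$ denotes the resulting amplification factor on the test equation. *)

theory Defs
  imports "HOL-Analysis.Analysis" "HOL-Computational_Algebra.Polynomial"
begin

fun cheb_T :: "nat \<Rightarrow> real \<Rightarrow> real" where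
  "cheb_T 0 x = 1"
| "cheb_T (Suc 0) x = x"
| "cheb_T (Suc (Suc j)) x = 2 * x * cheb_T (Suc j) x - cheb_T j x"

definition rkc_omega0 :: "nat \<Rightarrow> real \<Rightarrow> real" where
  "rkc_omega0 m eps = 1 + eps / (real m)^2"

definition rkc_omega1 :: "nat \<Rightarrow> real \<Rightarrow> real" where
  "rkc_omega1 m eps = cheb_T m (rkc_omega0 m eps) / deriv (cheb_T m) (rkc_omega0 m eps)"

definition rkc_b :: "nat \<Rightarrow> real \<Rightarrow> nat \<Rightarrow> real" where
  "rkc_b m eps j = 1 / cheb_T j (rkc_omega0 m eps)"

definition rkc_mu :: "nat \<Rightarrow> real \<Rightarrow> nat \<Rightarrow> real" where
  "rkc_mu m eps j = 2 * rkc_omega1 m eps * rkc_b m eps j / rkc_b m eps (j - 1)"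

definition rkc_nu :: "nat \<Rightarrow> real \<Rightarrow> nat \<Rightarrow> real" where
  "rkc_nu m eps j = 2 * rkc_omega0 m eps * rkc_b m eps j / rkc_b m eps (j - 1)"

definition rkc_kappa :: "nat \<Rightarrow> real \<Rightarrow> nat \<Rightarrow> real" where
  "rkc_kappa m eps j = - rkc_b m eps j / rkc_b m eps (j - 2)"

fun rkc_stage :: "nat \<Rightarrow> real \<Rightarrow> real \<Rightarrow> (real \<Rightarrow> real) \<Rightarrow> real \<Rightarrow> nat \<Rightarrow> real" where
  "rkc_stage m eps h g u0 0 = u0"
| "rkc_stage m eps h g u0 (Suc 0) =
     u0 + rkc_omega1 m eps / rkc_omega0 m eps * h * g u0"
| "rkc_stage m eps h g u0 (Suc (Suc j)) =
     rkc_nu m eps (j + 2) * rkc_stage m eps h g u0 (Suc j)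
     + rkc_kappa m eps (j + 2) * rkc_stage m eps h g u0 j
     + rkc_mu m eps (j + 2) * h * g (rkc_stage m eps h g u0 (Suc j))"

definition rkc_step :: "nat \<Rightarrow> real \<Rightarrow> real \<Rightarrow> (real \<Rightarrow> real) \<Rightarrow> real \<Rightarrow> real" where
  "rkc_step m eps h g u0 = rkc_stage m eps h g u0 m"

definition rkc_P :: "nat \<Rightarrow> real \<Rightarrow> real \<Rightarrow> real" where
  "rkc_P m eps z = rkc_b m eps m * cheb_T m (rkc_omega0 m eps + rkc_omega1 m eps * z)"

definition rkc_ell :: "nat \<Rightarrow> real \<Rightarrow> real" where
  "rkc_ell m eps = 2 * rkc_omega0 m eps / rkc_omega1 m eps"

definition rkc_alpha :: "nat \<Rightarrow> real \<Rightarrow> real" where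
  "rkc_alpha m eps = deriv (deriv (rkc_P m eps)) 0"

definition fbar1 :: "nat \<Rightarrow> real \<Rightarrow> real \<Rightarrow> (real \<Rightarrow> real) \<Rightarrow> (real \<Rightarrow> real) \<Rightarrow> real \<Rightarrow> real" where
  "fbar1 m eps eta fF fS y = (rkc_step m eps eta (\<lambda>u. fF u + fS y) y - y) / eta"

definition fbar2 :: "nat \<Rightarrow> real \<Rightarrow> real \<Rightarrow> (real \<Rightarrow> real) \<Rightarrow> (real \<Rightarrow> real) \<Rightarrow> real \<Rightarrow> real" where
  "fbar2 m eps eta fF fS y =
     (rkc_step m eps eta
        (\<lambda>v. fF (v - rkc_alpha m eps * eta / 2 * fbar1 m eps eta fF fS y) + fS y) y - y) / eta"

end

theory Submission
  imports Defs
begin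

fun chebp :: "nat \<Rightarrow> real poly" where
  "chebp 0 = 1"
| "chebp (Suc 0) = [:0,1:]"
| "chebp (Suc (Suc n)) = smult 2 ([:0,1:] * chebp (Suc n)) - chebp n"

lemma poly_chebp: "poly (chebp n) x = cheb_T n x"
  by (induction n rule: chebp.induct) (simp_all add: algebra_simps)

lemma cheb_T_eq: "cheb_T n = poly (chebp n)"
  by (rule ext) (simp add: poly_chebp)

lemma pderiv_chebp_SS:
  "poly (pderiv (chebp (Suc (Suc n)))) x =
     2 * cheb_T (Suc n) x + 2 * x * poly (pderiv (chebp (Suc n))) x - poly (pderiv (chebp n)) x"
  by (simp add: pderiv_diff pderiv_smult pderiv_mult pderiv_pCons poly_chebp algebra_simps)

lemma chebE_pt:
  "(1 - x^2) * poly (pderiv (chebp n)) x = real n * (x * cheb_T n x - cheb_T (Suc n) x)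
   \<and> (1 - x^2) * poly (pderiv (chebp (Suc n))) x = real (Suc n) * (x * cheb_T (Suc n) x - cheb_T (Suc (Suc n)) x)"
proof (induction n)
  case 0
  then show ?case by (simp add: pderiv_pCons algebra_simps power2_eq_square)
next
  case (Suc n)
  have A: "(1 - x^2) * poly (pderiv (chebp (Suc n))) x = real (Suc n) * (x * cheb_T (Suc n) x - cheb_T (Suc (Suc n)) x)"
    using Suc by blast
  have B: "(1 - x^2) * poly (pderiv (chebp n)) x = real n * (x * cheb_T n x - cheb_T (Suc n) x)"
    using Suc by blast
  have "(1 - x^2) * poly (pderiv (chebp (Suc (Suc n)))) x
      = 2 * (1 - x^2) * cheb_T (Suc n) x + 2 * x * ((1 - x^2) * poly (pderiv (chebp (Suc n))) x) - (1 - x^2) * poly (pderiv (chebp n)) x"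
    by (simp only: pderiv_chebp_SS) (simp add: algebra_simps)
  also have "\<dots> = real (Suc (Suc n)) * (x * cheb_T (Suc (Suc n)) x - cheb_T (Suc (Suc (Suc n))) x)"
    unfolding A B by (simp add: algebra_simps power2_eq_square)
  finally show ?case using A by blast
qed


lemma chebE_poly: "[:1,0,-1:] * pderiv (chebp n) = smult (real n) ([:0,1:] * chebp n - chebp (Suc n))"
proof -
  have "poly ([:1,0,-1:] * pderiv (chebp n)) x = poly (smult (real n) ([:0,1:] * chebp n - chebp (Suc n))) x" for x
  proof -
    have "poly ([:1,0,-1:] * pderiv (chebp n)) x = (1 - x^2) * poly (pderiv (chebp n)) x"
      by (simp add: algebra_simps power2_eq_square)
    also have "\<dots> = real n * (x * cheb_T n x - cheb_T (Suc n) x)" using chebE_pt[of x n] by blast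
    finally show ?thesis by (simp add: poly_chebp)
  qed
  then show ?thesis by (intro poly_eq_poly_eq_iff[THEN iffD1]) (rule ext)
qed

lemma cheb_ode_poly:
  "[:1,0,-1:] * pderiv (pderiv (chebp n)) - [:0,1:] * pderiv (chebp n) + smult (real n ^ 2) (chebp n) = 0"
  (is "?Q = 0")
proof -
  have "poly ([:1,0,-1:] * ?Q) x = 0" for x
  proof -
    define T where "T = cheb_T n x"
    define T1 where "T1 = cheb_T (Suc n) x"
    define D where "D = poly (pderiv (chebp n)) x"
    define D1 where "D1 = poly (pderiv (chebp (Suc n))) x"
    define DD where "DD = poly (pderiv (pderiv (chebp n))) x"
    have e1: "(1 - x^2) * D = real n * (x * T - T1)" using chebE_pt[of x n] by (simp add: D_def T_def T1_def)
    have e2: "(1 - x^2) * D1 = real (Suc n) * (x * T1 - (2 * x * T1 - T))" using chebE_pt[of x n]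
      by (simp add: D1_def T_def T1_def)
    have "poly (pderiv ([:1,0,-1:] * pderiv (chebp n))) x = poly (pderiv (smult (real n) ([:0,1:] * chebp n - chebp (Suc n)))) x"
      by (simp only: chebE_poly)
    then have e3: "(1 - x^2) * DD - 2 * x * D = real n * (T + x * D - D1)"
      by (simp add: pderiv_mult pderiv_pCons pderiv_smult pderiv_diff pderiv_add pderiv_minus DD_def D_def D1_def T_def poly_chebp algebra_simps power2_eq_square)
    have "poly ([:1,0,-1:] * ?Q) x = (1 - x^2) * ((1 - x^2) * DD - x * D + real n ^ 2 * T)"
      by (simp add: DD_def D_def T_def poly_chebp algebra_simps power2_eq_square)
    also have "\<dots> = (1 - x^2) * ((1 - x^2) * DD - 2 * x * D) + x * ((1 - x^2) * D) + real n ^ 2 * (1 - x^2) * T"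
      by (simp add: algebra_simps)
    also have "\<dots> = (1 - x^2) * (real n * (T + x * D - D1)) + x * ((1 - x^2) * D) + real n ^ 2 * (1 - x^2) * T"
      by (simp only: e3)
    also have "\<dots> = real n * (1 - x^2) * T + real n * x * ((1 - x^2) * D) - real n * ((1 - x^2) * D1) + x * ((1 - x^2) * D) + real n ^ 2 * (1 - x^2) * T"
      by (simp add: algebra_simps)
    also have "\<dots> = 0"
      unfolding e1 e2 by (simp add: algebra_simps power2_eq_square)
    finally show ?thesis .
  qed
  then have "[:1,0,-1:] * ?Q = 0" by (intro poly_eq_poly_eq_iff[THEN iffD1]) (rule ext, simp)
  moreover have "[:1,0,-1::real:] \<noteq> 0" by simp
  ultimately show ?thesis by (metis mult_eq_0_iff)
qed

lemma cheb_ode_k: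
  "[:1,0,-1:] * (pderiv ^^ (k+2)) (chebp n) - smult (real (2*k+1)) ([:0,1:] * (pderiv ^^ (k+1)) (chebp n))
     + smult (real n ^ 2 - real k ^ 2) ((pderiv ^^ k) (chebp n)) = 0"
proof (induction k)
  case 0
  then show ?case using cheb_ode_poly[of n] by (simp add: numeral_2_eq_2)
next
  case (Suc k)
  let ?D = "\<lambda>j. (pderiv ^^ j) (chebp n)"
  have "pderiv ([:1,0,-1:] * ?D (k+2) - smult (real (2*k+1)) ([:0,1:] * ?D (k+1))
     + smult (real n ^ 2 - real k ^ 2) (?D k)) = 0"
    using Suc by simp
  moreover have "pderiv ([:1,0,-1:] * ?D (k+2) - smult (real (2*k+1)) ([:0,1:] * ?D (k+1))
     + smult (real n ^ 2 - real k ^ 2) (?D k)) =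
     [:1,0,-1:] * ?D (Suc k+2) - smult (real (2*Suc k+1)) ([:0,1:] * ?D (Suc k+1))
     + smult (real n ^ 2 - real (Suc k) ^ 2) (?D (Suc k))"
  proof -
    have "poly (pderiv ([:1,0,-1:] * ?D (k+2) - smult (real (2*k+1)) ([:0,1:] * ?D (k+1))
     + smult (real n ^ 2 - real k ^ 2) (?D k))) x = poly ([:1,0,-1:] * ?D (Suc k+2) - smult (real (2*Suc k+1)) ([:0,1:] * ?D (Suc k+1))
     + smult (real n ^ 2 - real (Suc k) ^ 2) (?D (Suc k))) x" for x
      by (simp add: pderiv_mult pderiv_pCons pderiv_smult pderiv_diff pderiv_add pderiv_minus pderiv_add algebra_simps power2_eq_square)
    then show ?thesis by (intro poly_eq_poly_eq_iff[THEN iffD1]) (rule ext)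
  qed
  ultimately show ?case by simp
qed

lemma cheb_ode_k_pt:
  "(1 - x^2) * poly ((pderiv ^^ (k+2)) (chebp n)) x - real (2*k+1) * x * poly ((pderiv ^^ (k+1)) (chebp n)) x
     + (real n ^ 2 - real k ^ 2) * poly ((pderiv ^^ k) (chebp n)) x = 0"
proof -
  have "poly ([:1,0,-1:] * (pderiv ^^ (k+2)) (chebp n) - smult (real (2*k+1)) ([:0,1:] * (pderiv ^^ (k+1)) (chebp n))
     + smult (real n ^ 2 - real k ^ 2) ((pderiv ^^ k) (chebp n))) x = 0"
    by (simp only: cheb_ode_k) simp
  then show ?thesis by (simp add: algebra_simps power2_eq_square)
qed


lemma chebp_coeff: "coeff (chebp n) n \<ge> 1 \<and> (\<forall>k>n. coeff (chebp n) k = 0)"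
proof -
  have "(coeff (chebp n) n \<ge> 1 \<and> (\<forall>k>n. coeff (chebp n) k = 0)) \<and>
        (coeff (chebp (Suc n)) (Suc n) \<ge> 1 \<and> (\<forall>k>Suc n. coeff (chebp (Suc n)) k = 0))"
  proof (induction n)
    case 0
    then show ?case by (auto simp: coeff_pCons split: nat.split)
  next
    case (Suc n)
    then have IH1: "coeff (chebp (Suc n)) (Suc n) \<ge> 1" "\<forall>k>Suc n. coeff (chebp (Suc n)) k = 0"
      and IH0: "\<forall>k>n. coeff (chebp n) k = 0" by auto
    have c: "coeff (chebp (Suc (Suc n))) k = 2 * (case k of 0 \<Rightarrow> 0 | Suc j \<Rightarrow> coeff (chebp (Suc n)) j) - coeff (chebp n) k" for k
      by (simp add: coeff_pCons split: nat.split)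
    have "coeff (chebp (Suc (Suc n))) (Suc (Suc n)) \<ge> 1"
      unfolding c using IH1 IH0 by simp
    moreover have "\<forall>k>Suc (Suc n). coeff (chebp (Suc (Suc n))) k = 0"
    proof (intro allI impI)
      fix k assume k: "k > Suc (Suc n)"
      then obtain j where j: "k = Suc j" "j > Suc n" by (cases k) auto
      show "coeff (chebp (Suc (Suc n))) k = 0"
        unfolding c using IH1 IH0 j k by simp
    qed
    ultimately show ?case using Suc by blast
  qed
  then show ?thesis by blast
qed

lemma degree_chebp: "degree (chebp n) = n"
proof (rule antisym)
  show "degree (chebp n) \<le> n" using chebp_coeff[of n] by (intro degree_le) auto
  show "n \<le> degree (chebp n)" using chebp_coeff[of n] by (intro le_degree) auto
qed

definition chebd :: "nat \<Rightarrow> nat \<Rightarrow> real \<Rightarrow> real" where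
  "chebd n j x = poly ((pderiv ^^ j) (chebp n)) x"

lemma chebd_0: "chebd n 0 x = cheb_T n x"
  by (simp add: chebd_def poly_chebp)

lemma chebd_1: "chebd n 1 x = deriv (cheb_T n) x"
proof -
  have "deriv (poly (chebp n)) x = poly (pderiv (chebp n)) x"
    by (rule DERIV_imp_deriv) (rule poly_DERIV)
  then show ?thesis by (simp add: chebd_def cheb_T_eq)
qed

lemma chebd_big: "j > n \<Longrightarrow> chebd n j x = 0"
proof -
  assume j: "j > n"
  have "(pderiv ^^ j) (chebp n) = 0"
  proof (rule poly_eqI)
    fix i
    show "coeff ((pderiv ^^ j) (chebp n)) i = coeff 0 i"
      using chebp_coeff[of n] j by (simp add: coeff_higher_pderiv)
  qed
  then show ?thesis by (simp add: chebd_def)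
qed

lemma chebd_top: "chebd n n x = fact n * coeff (chebp n) n"
proof -
  have "(pderiv ^^ n) (chebp n) = [:fact n * coeff (chebp n) n:]"
  proof (rule poly_eqI)
    fix i
    show "coeff ((pderiv ^^ n) (chebp n)) i = coeff [:fact n * coeff (chebp n) n:] i"
      using chebp_coeff[of n] by (cases i) (simp_all add: coeff_higher_pderiv pochhammer_fact)
  qed
  then show ?thesis by (simp add: chebd_def)
qed

lemma chebd_ode:
  "(1 - x^2) * chebd n (k+2) x - real (2*k+1) * x * chebd n (k+1) x
     + (real n ^ 2 - real k ^ 2) * chebd n k x = 0"
  using cheb_ode_k_pt[of x k n] by (simp add: chebd_def)

lemma chebd_nonneg:
  assumes x: "x \<ge> 1"
  shows "chebd n j x \<ge> 0"
proof (cases "j \<le> n")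
  case False then show ?thesis by (simp add: chebd_big)
next
  case True
  have top: "chebd n n x \<ge> 0 \<and> chebd n (Suc n) x \<ge> 0"
    using chebp_coeff[of n] by (simp add: chebd_top chebd_big)
  have "chebd n j x \<ge> 0 \<and> chebd n (Suc j) x \<ge> 0"
    using True
  proof (induction j rule: inc_induct)
    case base then show ?case using top by simp
  next
    case (step k)
    have h1: "chebd n (Suc k) x \<ge> 0" and h2: "chebd n (k+2) x \<ge> 0"
      using step.IH by (simp_all add: numeral_2_eq_2)
    have kn: "real k < real n" using step.hyps by simp
    have pos: "real n ^ 2 - real k ^ 2 > 0"
      using kn by (smt (verit) of_nat_0_le_iff power_strict_mono zero_less_numeral)
    have eq: "(real n ^ 2 - real k ^ 2) * chebd n k x = (x^2 - 1) * chebd n (k+2) x + real (2*k+1) * x * chebd n (k+1) x"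
      using chebd_ode[of x n k] by (simp add: algebra_simps)
    have "(x^2 - 1) * chebd n (k+2) x \<ge> 0"
      using x h2 by (simp add: one_le_power)
    moreover have "real (2*k+1) * x * chebd n (k+1) x \<ge> 0" using x h1 by simp
    ultimately have "(real n ^ 2 - real k ^ 2) * chebd n k x \<ge> 0" using eq by linarith
    then have "chebd n k x \<ge> 0" using pos by (metis zero_le_mult_iff not_le)
    then show ?case using h1 by simp
  qed
  then show ?thesis by simp
qed

lemma higher_pderiv_pcompose_shift:
  "(pderiv ^^ k) (pcompose p [:a, 1:]) = pcompose ((pderiv ^^ k) p) [:a, (1::real):]"
  by (induction k) (simp_all add: pderiv_pcompose pderiv_pCons)

lemma cheb_taylor:
  "cheb_T n (a + y) = (\<Sum>k\<le>n. chebd n k a / fact k * y ^ k)"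
proof -
  define S where "S = pcompose (chebp n) [:a, 1:]"
  have pS: "poly S y = cheb_T n (a + y)" by (simp add: S_def poly_pcompose poly_chebp)
  have dS: "degree S = n" by (simp add: S_def degree_pcompose degree_chebp)
  have cS: "coeff S k = chebd n k a / fact k" for k
  proof -
    have "coeff ((pderiv ^^ k) S) 0 = fact k * coeff S k"
      by (simp add: coeff_higher_pderiv pochhammer_fact)
    moreover have "coeff ((pderiv ^^ k) S) 0 = chebd n k a"
      by (simp add: S_def higher_pderiv_pcompose_shift chebd_def poly_0_coeff_0[symmetric] poly_pcompose)
    ultimately show ?thesis by (simp add: field_simps)
  qed
  show ?thesis using poly_altdef[of S y] by (simp add: pS dS cS)
qed


lemma cheb_cos: "cheb_T n (cos t) = cos (real n * t)"
proof (induction n rule: chebp.induct)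
  case (3 j)
  have "cos (real (Suc (Suc j)) * t) = 2 * cos t * cos (real (Suc j) * t) - cos (real j * t)"
  proof -
    have a: "cos (real (Suc (Suc j)) * t) = cos (real (Suc j) * t + t)" by (simp add: algebra_simps)
    have b: "cos (real j * t) = cos (real (Suc j) * t - t)" by (simp add: algebra_simps)
    show ?thesis unfolding a b cos_add cos_diff by simp
  qed
  then show ?case using 3 by simp
qed simp_all

lemma cheb_one: "cheb_T n 1 = 1"
  using cheb_cos[of n 0] by simp

lemma cheb_neg: "cheb_T n (-x) = (-1)^n * cheb_T n x"
  by (induction n rule: chebp.induct) (simp_all add: algebra_simps)

lemma cheb_ge1_mono:
  assumes "1 \<le> x" "x \<le> y"
  shows "1 \<le> cheb_T n x \<and> cheb_T n x \<le> cheb_T n y"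
proof -
  have tx: "cheb_T n x = (\<Sum>k\<le>n. chebd n k 1 / fact k * (x - 1) ^ k)"
    using cheb_taylor[of n 1 "x - 1"] by simp
  have ty: "cheb_T n y = (\<Sum>k\<le>n. chebd n k 1 / fact k * (y - 1) ^ k)"
    using cheb_taylor[of n 1 "y - 1"] by simp
  have nn: "chebd n k 1 / fact k \<ge> 0" for k by (simp add: chebd_nonneg)
  have "cheb_T n x \<le> cheb_T n y"
    unfolding tx ty
    by (intro sum_mono mult_left_mono power_mono) (use assms nn in auto)
  moreover have "1 \<le> cheb_T n x"
  proof -
    have "(\<Sum>k\<le>n. chebd n k 1 / fact k * (x - 1) ^ k) = chebd n 0 1 + (\<Sum>k\<in>{1..n}. chebd n k 1 / fact k * (x - 1) ^ k)"
      by (simp add: atMost_atLeast0 sum.atLeast_Suc_atMost)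
    moreover have "(\<Sum>k\<in>{1..n}. chebd n k 1 / fact k * (x - 1) ^ k) \<ge> 0"
      using nn assms by (intro sum_nonneg mult_nonneg_nonneg) auto
    ultimately show ?thesis using tx by (simp add: chebd_0 cheb_one)
  qed
  ultimately show ?thesis by simp
qed

lemma cheb_bound:
  assumes "1 \<le> x0" "\<bar>x\<bar> \<le> x0"
  shows "\<bar>cheb_T n x\<bar> \<le> cheb_T n x0"
proof (cases "\<bar>x\<bar> \<le> 1")
  case True
  then have "x = cos (arccos x)" by simp
  then have "\<bar>cheb_T n x\<bar> \<le> 1" by (metis abs_cos_le_one cheb_cos)
  also have "1 \<le> cheb_T n x0" using cheb_ge1_mono[of x0 x0 n] assms by simp
  finally show ?thesis .
next
  case False
  have "\<bar>cheb_T n x\<bar> = cheb_T n \<bar>x\<bar>"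
  proof (cases "x \<ge> 0")
    case True then show ?thesis using cheb_ge1_mono[of x x n] False by simp
  next
    case f2: False
    then have "cheb_T n x = (-1)^n * cheb_T n \<bar>x\<bar>" using cheb_neg[of n "\<bar>x\<bar>"] by simp
    then show ?thesis using cheb_ge1_mono[of "\<bar>x\<bar>" "\<bar>x\<bar>" n] False by (simp add: abs_mult)
  qed
  also have "\<dots> \<le> cheb_T n x0" using cheb_ge1_mono[of "\<bar>x\<bar>" x0 n] False assms by simp
  finally show ?thesis .
qed


fun chebV :: "nat \<Rightarrow> real \<Rightarrow> real \<Rightarrow> real" where
  "chebV 0 y a = 0"
| "chebV (Suc 0) y a = 1"
| "chebV (Suc (Suc j)) y a = 2 * y * chebV (Suc j) y a - chebV j y a + 2 * cheb_T (Suc j) a"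

lemma chebV_diff: "(y - a) * chebV j y a = cheb_T j y - cheb_T j a"
proof (induction j rule: chebp.induct)
  case (3 n)
  have "(y - a) * chebV (Suc (Suc n)) y a = 2 * y * ((y - a) * chebV (Suc n) y a) - (y - a) * chebV n y a + 2 * (y - a) * cheb_T (Suc n) a"
    by (simp add: algebra_simps)
  also have "\<dots> = cheb_T (Suc (Suc n)) y - cheb_T (Suc (Suc n)) a"
    unfolding 3 by (simp add: algebra_simps)
  finally show ?case .
qed simp_all

lemma chebV_diag0: "chebV j a a = poly (pderiv (chebp j)) a"
proof (induction j rule: chebp.induct)
  case (3 n)
  then show ?case by (simp only: chebV.simps pderiv_chebp_SS poly_chebp)
qed (simp_all add: pderiv_pCons)

lemma chebV_diag: "chebV j a a = chebd j 1 a"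
  by (simp add: chebV_diag0 chebd_def)

lemma cheb_x0_pos: "1 \<le> x0 \<Longrightarrow> cheb_T j x0 \<ge> 1"
  using cheb_ge1_mono[of x0 x0 j] by simp

lemma stage_closed:
  assumes x0: "rkc_omega0 m eps \<ge> 1"
  shows "cheb_T j (rkc_omega0 m eps) * rkc_stage m eps h (\<lambda>u. lam * u + c) u0 j
       = cheb_T j (rkc_omega0 m eps + rkc_omega1 m eps * h * lam) * u0
         + rkc_omega1 m eps * h * c * chebV j (rkc_omega0 m eps + rkc_omega1 m eps * h * lam) (rkc_omega0 m eps)"
proof (induction j rule: chebp.induct)
  case 1 then show ?case by simp
next
  case 2 
  have "rkc_omega0 m eps \<noteq> 0" using x0 by simp
  then show ?case by (simp add: field_simps)
next
  case (3 j)
  define x where "x = rkc_omega0 m eps"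
  define w where "w = rkc_omega1 m eps"
  define y where "y = x + w * h * lam"
  define s where "s = rkc_stage m eps h (\<lambda>u. lam * u + c) u0"
  define t where "t = (\<lambda>i. cheb_T i x)"
  have tpos: "t i > 0" for i using cheb_x0_pos[of x i] x0 by (simp add: t_def x_def)
  have IH1: "t (Suc j) * s (Suc j) = cheb_T (Suc j) y * u0 + w * h * c * chebV (Suc j) y x"
    using 3(1) by (simp add: s_def t_def x_def w_def y_def)
  have IH0: "t j * s j = cheb_T j y * u0 + w * h * c * chebV j y x"
    using 3(2) by (simp add: s_def t_def x_def w_def y_def)
  have rec: "s (Suc (Suc j)) = (2 * x * t (Suc j) / t (Suc (Suc j))) * s (Suc j)
       - (t j / t (Suc (Suc j))) * s j + (2 * w * t (Suc j) / t (Suc (Suc j))) * h * (lam * s (Suc j) + c)"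
    by (simp add: s_def t_def x_def w_def rkc_nu_def rkc_kappa_def rkc_mu_def rkc_b_def numeral_2_eq_2)
  have "t (Suc (Suc j)) * s (Suc (Suc j)) = 2 * y * (t (Suc j) * s (Suc j)) - t j * s j + 2 * w * h * c * t (Suc j)"
    unfolding rec using tpos[of "Suc (Suc j)"] by (simp add: field_simps y_def)
  also have "\<dots> = cheb_T (Suc (Suc j)) y * u0 + w * h * c * chebV (Suc (Suc j)) y x"
    unfolding IH1 IH0 by (simp add: algebra_simps t_def)
  finally show ?case by (simp add: s_def t_def x_def w_def y_def)
qed


lemma deriv_poly_fun: "deriv (poly p) = poly (pderiv p)"
  by (rule ext) (rule DERIV_imp_deriv, rule poly_DERIV)

lemma rkc_P_poly:
  "rkc_P m eps = poly (smult (rkc_b m eps m) (pcompose (chebp m) [:rkc_omega0 m eps, rkc_omega1 m eps:]))"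
  by (rule ext) (simp add: rkc_P_def poly_pcompose poly_chebp algebra_simps)

lemma rkc_alpha_eq:
  "rkc_alpha m eps = rkc_b m eps m * rkc_omega1 m eps ^ 2 * chebd m 2 (rkc_omega0 m eps)"
proof -
  have "rkc_alpha m eps = poly (pderiv (pderiv (smult (rkc_b m eps m) (pcompose (chebp m) [:rkc_omega0 m eps, rkc_omega1 m eps:])))) 0"
    unfolding rkc_alpha_def rkc_P_poly deriv_poly_fun ..
  also have "\<dots> = rkc_b m eps m * rkc_omega1 m eps ^ 2 * chebd m 2 (rkc_omega0 m eps)"
    by (simp add: pderiv_smult pderiv_pcompose pderiv_mult pderiv_pCons poly_pcompose chebd_def numeral_2_eq_2 power2_eq_square)
  finally show ?thesis .
qed


lemma chebd_ratio:
  assumes "x \<ge> 1"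
  shows "real (2*k+1) * x * chebd n (k+1) x \<le> real n ^ 2 * chebd n k x"
proof -
  have a: "(x^2 - 1) * chebd n (k+2) x \<ge> 0" using assms chebd_nonneg[of x n "k+2"] by (simp add: one_le_power)
  have b: "real k ^ 2 * chebd n k x \<ge> 0" using assms chebd_nonneg[of x n k] by simp
  have "real (2*k+1) * x * chebd n (k+1) x = (real n ^ 2 - real k ^ 2) * chebd n k x - (x^2 - 1) * chebd n (k+2) x"
    using chebd_ode[of x n k] by (simp add: algebra_simps)
  also have "\<dots> \<le> real n ^ 2 * chebd n k x" using a b by (simp add: algebra_simps)
  finally show ?thesis .
qed

lemma alt_sum:
  fixes d :: "nat \<Rightarrow> real"
  assumes dec: "\<And>k. k \<ge> n \<Longrightarrow> d (Suc k) \<le> d k" and nn: "\<And>k. k \<ge> n \<Longrightarrow> 0 \<le> d k"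
  shows "0 \<le> (\<Sum>i<N. (-1)^i * d (n + i)) \<and> (\<Sum>i<N. (-1)^i * d (n + i)) \<le> d n"
  using dec nn
proof (induction N arbitrary: n)
  case 0 then show ?case by simp
next
  case (Suc N)
  have IH: "0 \<le> (\<Sum>i<N. (-1)^i * d (Suc n + i)) \<and> (\<Sum>i<N. (-1)^i * d (Suc n + i)) \<le> d (Suc n)"
    using Suc.IH[of "Suc n"] Suc.prems by simp
  have "(\<Sum>i<Suc N. (-1)^i * d (n + i)) = (-1)^0 * d (n+0) + (\<Sum>i<N. (-1)^(Suc i) * d (n + Suc i))"
    by (rule sum.lessThan_Suc_shift)
  also have "\<dots> = d n - (\<Sum>i<N. (-1)^i * d (Suc n + i))"
    by (simp add: sum_negf)
  finally have "(\<Sum>i<Suc N. (-1)^i * d (n + i)) = d n - (\<Sum>i<N. (-1)^i * d (Suc n + i))" .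
  then show ?case using IH Suc.prems(1)[of n] Suc.prems(2)[of n] by simp
qed

lemma sum_split4:
  fixes f :: "nat \<Rightarrow> real"
  shows "(\<Sum>k<N+4. f k) = (\<Sum>k<4. f k) + (\<Sum>i<N. f (4 + i))"
proof (induction N)
  case 0 then show ?case by simp
next
  case (Suc N)
  have "(\<Sum>k<Suc N+4. f k) = (\<Sum>k<Suc (N+4). f k)" by simp
  also have "\<dots> = (\<Sum>k<N+4. f k) + f (N+4)" by (rule sum.lessThan_Suc)
  also have "\<dots> = (\<Sum>k<4. f k) + ((\<Sum>i<N. f (4 + i)) + f (4 + N))" using Suc by (simp add: add.commute)
  also have "\<dots> = (\<Sum>k<4. f k) + (\<Sum>i<Suc N. f (4 + i))" by simp
  finally show ?case .
qed

lemma sum_extend: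
  fixes f :: "nat \<Rightarrow> real"
  assumes "\<And>k. k > m \<Longrightarrow> f k = 0"
  shows "(\<Sum>k\<le>m. f k) = (\<Sum>k<m+4. f k)"
proof -
  have "(\<Sum>k<m+4. f k) = (\<Sum>k\<le>m. f k) + (\<Sum>k\<in>{Suc m..<m+4}. f k)"
  proof -
    have "{..<m+4} = {..m} \<union> {Suc m..<m+4}" by auto
    moreover have "{..m} \<inter> {Suc m..<m+4} = {}" by auto
    ultimately show ?thesis by (simp add: sum.union_disjoint)
  qed
  moreover have "(\<Sum>k\<in>{Suc m..<m+4}. f k) = 0" using assms by (intro sum.neutral) auto
  ultimately show ?thesis by simp
qed

lemma P_small_bound:
  fixes m :: nat and eps w :: real
  defines "x0 \<equiv> rkc_omega0 m eps" and "w1 \<equiv> rkc_omega1 m eps"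
  assumes x0: "x0 \<ge> 1" and t1: "chebd m 1 x0 > 0" and w1K: "w1 * real m ^ 2 \<le> 51/50"
    and w0: "0 \<le> w" and w40: "w \<le> 40"
  shows "1 - rkc_P m eps (-w) \<le> w - rkc_alpha m eps / 2 * w^2
           + w1^3 * chebd m 3 x0 / (6 * cheb_T m x0) * w^3"
proof -
  define t0 where "t0 = cheb_T m x0"
  have t0p: "t0 \<ge> 1" using cheb_x0_pos[OF x0] by (simp add: t0_def)
  have dd: "deriv (cheb_T m) x0 = chebd m 1 x0" by (simp only: chebd_1)
  have w1eq: "w1 = t0 / chebd m 1 x0" unfolding w1_def rkc_omega1_def t0_def x0_def dd[unfolded x0_def] ..
  have w1p: "w1 > 0" using w1eq t0p t1 by simp
  define c where "c = (\<lambda>k. w1^k * chebd m k x0 / (fact k * t0))"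
  define d where "d = (\<lambda>k. c k * w^k)"
  have cnn: "c k \<ge> 0" for k using chebd_nonneg[OF x0, of m k] w1p t0p by (simp add: c_def)
  have P: "rkc_P m eps (-w) = (\<Sum>k\<le>m. (-1)^k * d k)"
  proof -
    have "rkc_P m eps (-w) = (1 / t0) * cheb_T m (x0 + (- w1 * w))"
      by (simp add: rkc_P_def rkc_b_def t0_def x0_def w1_def)
    also have "\<dots> = (1/t0) * (\<Sum>k\<le>m. chebd m k x0 / fact k * (- w1 * w) ^ k)"
      by (simp only: cheb_taylor)
    also have "\<dots> = (\<Sum>k\<le>m. (1/t0) * (chebd m k x0 / fact k * (- w1 * w) ^ k))"
      by (rule sum_distrib_left)
    also have "\<dots> = (\<Sum>k\<le>m. (-1)^k * d k)"
    proof (rule sum.cong)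
      fix k
      have pw: "(- w1 * w) ^ k = (-1)^k * (w1^k * w^k)"
        by (metis mult.assoc mult_minus1 power_mult_distrib)
      show "(1/t0) * (chebd m k x0 / fact k * (- w1 * w) ^ k) = (-1)^k * d k"
        unfolding pw d_def c_def by (simp add: divide_simps)
    qed simp
    finally show ?thesis .
  qed
  have dz: "(-1)^k * d k = 0" if "k > m" for k using that by (simp add: d_def c_def chebd_big)
  have P2: "rkc_P m eps (-w) = (\<Sum>k<4. (-1)^k * d k) + (\<Sum>i<m. (-1)^i * d (4 + i))"
  proof -
    have "(\<Sum>k\<le>m. (-1)^k * d k) = (\<Sum>k<m+4. (-1)^k * d k)" by (rule sum_extend) (rule dz)
    also have "\<dots> = (\<Sum>k<4. (-1)^k * d k) + (\<Sum>i<m. (-1)^(4+i) * d (4+i))" by (rule sum_split4)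
    also have "\<dots> = (\<Sum>k<4. (-1)^k * d k) + (\<Sum>i<m. (-1)^i * d (4+i))" by (simp add: power_add)
    finally show ?thesis using P by simp
  qed
  have tail: "(\<Sum>i<m. (-1)^i * d (4 + i)) \<ge> 0"
  proof -
    have dec: "d (Suc k) \<le> d k" if "k \<ge> 4" for k
    proof -
      have r: "real (2*k+1) * x0 * chebd m (k+1) x0 \<le> real m ^ 2 * chebd m k x0" by (rule chebd_ratio[OF x0])
      have k45: "45 \<le> real (Suc k) * real (2*k+1)"
      proof -
        have "(5::nat) * 9 \<le> Suc k * (2*k+1)" using that by (intro mult_le_mono) simp_all
        then have "real (5 * 9) \<le> real (Suc k * (2*k+1))" by (simp only: of_nat_le_iff)
        then show ?thesis by (simp only: of_nat_mult)
      qed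
      have "45 * chebd m (k+1) x0 \<le> real (Suc k) * real (2*k+1) * x0 * chebd m (k+1) x0"
      proof -
        have "45 * 1 \<le> real (Suc k) * real (2*k+1) * x0" using k45 x0 by (intro mult_mono) simp_all
        then show ?thesis using chebd_nonneg[OF x0, of m "k+1"] by (intro mult_right_mono) simp_all
      qed
      also have "\<dots> \<le> real (Suc k) * (real m ^ 2 * chebd m k x0)"
        using r by (simp add: mult.assoc mult_left_mono)
      finally have A: "45 * chebd m (Suc k) x0 \<le> real (Suc k) * real m ^ 2 * chebd m k x0" by simp
      have "c (Suc k) = w1 * (w1^k * chebd m (Suc k) x0) / (real (Suc k) * fact k * t0)"
        by (simp add: c_def)
      have cs: "45 * c (Suc k) \<le> w1 * real m ^ 2 * c k"
      proof -
        have "45 * c (Suc k) = w1 * w1^k * (45 * chebd m (Suc k) x0) / (real (Suc k) * fact k * t0)"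
          by (simp add: c_def)
        also have "\<dots> \<le> w1 * w1^k * (real (Suc k) * real m ^ 2 * chebd m k x0) / (real (Suc k) * fact k * t0)"
          using A w1p t0p by (intro divide_right_mono mult_left_mono) simp_all
        also have "\<dots> = w1 * real m ^ 2 * c k"
        proof -
          have nz: "real (Suc k) \<noteq> 0" "fact k * t0 \<noteq> 0" using t0p by simp_all
          have "w1 * w1^k * (real (Suc k) * real m ^ 2 * chebd m k x0) / (real (Suc k) * fact k * t0)
              = (real (Suc k) * (w1 * w1^k * real m ^ 2 * chebd m k x0)) / (real (Suc k) * (fact k * t0))"
            by (simp only: ac_simps)
          also have "\<dots> = (w1 * w1^k * real m ^ 2 * chebd m k x0) / (fact k * t0)"
            using nz(1) by (simp only: mult_divide_mult_cancel_left_if if_False)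
          also have "\<dots> = w1 * real m ^ 2 * c k" by (simp add: c_def)
          finally show ?thesis .
        qed
        finally show ?thesis .
      qed
      have "45 * d (Suc k) = (45 * c (Suc k)) * w * w^k" by (simp add: d_def)
      also have "\<dots> \<le> (w1 * real m ^ 2 * c k) * w * w^k" using cs w0 by (intro mult_right_mono) simp_all
      also have "\<dots> \<le> ((51/50) * c k) * 40 * w^k"
        using w1K w0 w40 cnn[of k] by (intro mult_right_mono mult_mono) simp_all
      also have "\<dots> \<le> 45 * d k" using cnn[of k] w0 by (simp add: d_def)
      finally show ?thesis by simp
    qed
    have nn: "0 \<le> d k" for k using cnn[of k] w0 by (simp add: d_def)
    show ?thesis using alt_sum[of 4 d m] dec nn by simp
  qed
  have c0: "c 0 = 1" using t0p by (simp add: c_def t0_def chebd_0)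
  have c1: "c 1 = 1" using t1 t0p by (simp add: c_def w1eq)
  have c2: "c 2 = rkc_alpha m eps / 2"
    by (simp add: c_def rkc_alpha_eq rkc_b_def t0_def x0_def w1_def)
  have c3: "c 3 = w1^3 * chebd m 3 x0 / (6 * cheb_T m x0)"
    by (simp add: c_def t0_def fact_numeral)
  have first: "(\<Sum>k<4. (-1)^k * d k) = 1 - w + rkc_alpha m eps / 2 * w^2 - w1^3 * chebd m 3 x0 / (6 * cheb_T m x0) * w^3"
  proof -
    have s4: "(\<Sum>k<4. (-1)^k * d k) = d 0 - d 1 + d 2 - d 3"
      by (simp add: eval_nat_numeral)
    show ?thesis unfolding s4 unfolding d_def c0 c1 c2 c3 by (simp add: t0_def)
  qed
  show ?thesis using P2 tail first by simp
qed

definition rkc_Phi :: "nat \<Rightarrow> real \<Rightarrow> real \<Rightarrow> real" where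
  "rkc_Phi m eps z = rkc_omega1 m eps * chebV m (rkc_omega0 m eps + rkc_omega1 m eps * z) (rkc_omega0 m eps)
                      / cheb_T m (rkc_omega0 m eps)"

lemma Phi_rel:
  assumes x0: "rkc_omega0 m eps \<ge> 1"
  shows "z * rkc_Phi m eps z = rkc_P m eps z - 1"
proof -
  define x where "x = rkc_omega0 m eps"
  define w where "w = rkc_omega1 m eps"
  have tp: "cheb_T m x \<ge> 1" using cheb_x0_pos[of x m] x0 by (simp add: x_def)
  have "z * rkc_Phi m eps z = ((x + w * z - x) * chebV m (x + w * z) x) / cheb_T m x"
    by (simp add: rkc_Phi_def x_def w_def algebra_simps)
  also have "\<dots> = (cheb_T m (x + w * z) - cheb_T m x) / cheb_T m x" by (simp only: chebV_diff)
  also have "\<dots> = rkc_P m eps z - 1" using tp by (simp add: rkc_P_def rkc_b_def x_def w_def field_simps)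
  finally show ?thesis .
qed

lemma Phi_zero:
  assumes x0: "rkc_omega0 m eps \<ge> 1" and t1: "chebd m 1 (rkc_omega0 m eps) > 0"
  shows "rkc_Phi m eps 0 = 1"
proof -
  define x where "x = rkc_omega0 m eps"
  have tp: "cheb_T m x \<ge> 1" using cheb_x0_pos[of x m] x0 by (simp add: x_def)
  have dd: "deriv (cheb_T m) x = chebd m 1 x" by (simp only: chebd_1)
  have "rkc_Phi m eps 0 = cheb_T m x / chebd m 1 x * chebd m 1 x / cheb_T m x"
    unfolding rkc_Phi_def rkc_omega1_def x_def[symmetric] dd by (simp add: chebV_diag)
  also have "\<dots> = 1" using tp t1 by (simp add: x_def)
  finally show ?thesis .
qed

lemma P_zero: "rkc_omega0 m eps \<ge> 1 \<Longrightarrow> rkc_P m eps 0 = 1"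
  using cheb_x0_pos[of "rkc_omega0 m eps" m] by (simp add: rkc_P_def rkc_b_def)

lemma step_closed:
  assumes x0: "rkc_omega0 m eps \<ge> 1"
  shows "rkc_step m eps h (\<lambda>u. lam * u + c) u0 = rkc_P m eps (h * lam) * u0 + h * rkc_Phi m eps (h * lam) * c"
proof -
  define x where "x = rkc_omega0 m eps"
  define w where "w = rkc_omega1 m eps"
  have tp: "cheb_T m x \<ge> 1" using cheb_x0_pos[of x m] x0 by (simp add: x_def)
  have S: "cheb_T m x * rkc_stage m eps h (\<lambda>u. lam * u + c) u0 m
       = cheb_T m (x + w * h * lam) * u0 + w * h * c * chebV m (x + w * h * lam) x"
    using stage_closed[OF x0, of m h lam c u0] by (simp add: x_def w_def)
  have "rkc_step m eps h (\<lambda>u. lam * u + c) u0 = (cheb_T m (x + w * h * lam) * u0 + w * h * c * chebV m (x + w * h * lam) x) / cheb_T m x"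
    using S tp unfolding rkc_step_def by (simp add: field_simps)
  also have "\<dots> = rkc_P m eps (h * lam) * u0 + h * rkc_Phi m eps (h * lam) * c"
    using tp by (simp add: rkc_P_def rkc_b_def rkc_Phi_def x_def w_def field_simps mult.assoc)
  finally show ?thesis .
qed

lemma fbar2_closed:
  assumes x0: "rkc_omega0 m eps \<ge> 1" and eta: "eta \<noteq> 0"
  shows "fbar2 m eps eta (\<lambda>u. lam * u) (\<lambda>u. zeta * u) y
       = y * ((lam + zeta) * rkc_Phi m eps (eta * lam) * (1 - rkc_alpha m eps * eta * lam * rkc_Phi m eps (eta * lam) / 2))"
proof -
  define F where "F = rkc_Phi m eps (eta * lam)"
  define P where "P = rkc_P m eps (eta * lam)"
  define al where "al = rkc_alpha m eps"
  have PF: "P = 1 + eta * lam * F" using Phi_rel[OF x0, of "eta * lam"] by (simp add: P_def F_def)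
  have f1: "fbar1 m eps eta (\<lambda>u. lam * u) (\<lambda>u. zeta * u) y = F * (lam + zeta) * y"
  proof -
    have "fbar1 m eps eta (\<lambda>u. lam * u) (\<lambda>u. zeta * u) y = (P * y + eta * F * (zeta * y) - y) / eta"
      unfolding fbar1_def step_closed[OF x0] P_def F_def ..
    also have "\<dots> = F * (lam + zeta) * y" unfolding PF using eta by (simp add: field_simps)
    finally show ?thesis .
  qed
  define c' where "c' = zeta * y - lam * (al * eta / 2 * (F * (lam + zeta) * y))"
  have fun_eq: "(\<lambda>v. lam * (v - rkc_alpha m eps * eta / 2 * fbar1 m eps eta (\<lambda>u. lam * u) (\<lambda>u. zeta * u) y) + zeta * y)
        = (\<lambda>v. lam * v + c')"
    unfolding f1 by (rule ext) (simp add: c'_def al_def algebra_simps)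
  have "fbar2 m eps eta (\<lambda>u. lam * u) (\<lambda>u. zeta * u) y = (P * y + eta * F * c' - y) / eta"
    unfolding fbar2_def fun_eq step_closed[OF x0] P_def F_def ..
  also have "\<dots> = y * ((lam + zeta) * F * (1 - al * eta * lam * F / 2))"
    unfolding PF c'_def using eta by (simp add: field_simps)
  finally show ?thesis by (simp add: F_def al_def)
qed

lemma consts_bounds:
  fixes x0 M t0 t1 t2 t3 t4 :: real
  assumes M: "M \<ge> 4" and x1: "1 \<le> x0" and x2: "x0 \<le> 1 + 1/400" and xm: "M * (x0^2 - 1) \<le> 3/100"
    and t0: "t0 \<ge> 1" and t2: "t2 \<ge> 0" and t3: "t3 \<ge> 0" and t4: "t4 \<ge> 0"
    and e0: "(1 - x0^2) * t2 - x0 * t1 + M * t0 = 0"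
    and e1: "(1 - x0^2) * t3 - 3 * x0 * t2 + (M - 1) * t1 = 0"
    and e2: "(1 - x0^2) * t4 - 5 * x0 * t3 + (M - 4) * t2 = 0"
  shows "t1 > 0 \<and> x0 \<le> t0 / t1 * M \<and> t0 / t1 * M \<le> 51/50
        \<and> 6/25 \<le> t0 / t1 * t2 / t1 \<and> t0 / t1 * t2 / t1 \<le> 7/20
        \<and> (t0/t1)^3 * t3 / (6 * t0) \<le> 3/20 * (t0 / t1 * t2 / t1)^2"
proof -
  define D where "D = x0^2 - 1"
  have D0: "D \<ge> 0" using x1 by (simp add: one_le_power D_def)
  have e0': "x0 * t1 = M * t0 - D * t2" using e0 by (simp add: algebra_simps D_def)
  have e1': "3 * x0 * t2 = (M - 1) * t1 - D * t3" using e1 by (simp add: algebra_simps D_def)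
  have e2': "5 * x0 * t3 = (M - 4) * t2 - D * t4" using e2 by (simp add: algebra_simps D_def)
  have Dt2: "D * t2 \<ge> 0" "D * t3 \<ge> 0" "D * t4 \<ge> 0" using D0 t2 t3 t4 by simp_all
  have b1: "3 * x0 * t2 \<le> (M - 1) * t1" using e1' Dt2 by linarith
  have b2: "5 * x0 * t3 \<le> M * t2"
  proof -
    have "(M - 4) * t2 = M * t2 - 4 * t2" by (simp add: algebra_simps)
    then show ?thesis using e2' Dt2 t2 by linarith
  qed
  have x0p: "x0 > 0" using x1 by simp
  have t2b: "t2 \<le> (M - 1) * t1 / (3 * x0)" using b1 x0p by (simp add: field_simps)
  have Dt2b: "D * t2 \<le> D * ((M - 1) * t1 / (3 * x0))" using t2b D0 by (rule mult_left_mono)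
  have Kup0: "M * t0 \<le> t1 * (x0 + D * (M - 1) / (3 * x0))"
  proof -
    have "M * t0 = x0 * t1 + D * t2" using e0' by simp
    also have "\<dots> \<le> x0 * t1 + D * ((M - 1) * t1 / (3 * x0))" using Dt2b by simp
    also have "\<dots> = t1 * (x0 + D * (M - 1) / (3 * x0))" using x0p by (simp add: field_simps)
    finally show ?thesis .
  qed
  have fpos: "x0 + D * (M - 1) / (3 * x0) > 0"
  proof -
    have "D * (M - 1) / (3 * x0) \<ge> 0" using D0 M x0p by simp
    then show ?thesis using x0p by simp
  qed
  have t1p: "t1 > 0"
  proof (rule ccontr)
    assume "\<not> t1 > 0"
    then have "t1 * (x0 + D * (M - 1) / (3 * x0)) \<le> 0" using fpos by (simp add: mult_nonpos_nonneg)
    moreover have "M * t0 > 0" using M t0 by simp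
    ultimately show False using Kup0 by simp
  qed
  have f_le: "x0 + D * (M - 1) / (3 * x0) \<le> 51/50"
  proof -
    have "D * (M - 1) \<le> D * M" using D0 by (simp add: mult_left_mono)
    also have "\<dots> \<le> 3/100" using xm by (simp add: D_def mult.commute)
    finally have a: "D * (M - 1) \<le> 3/100" .
    have "D * (M - 1) / (3 * x0) \<le> D * (M - 1) / 3"
      using D0 M x1 by (intro divide_left_mono) simp_all
    also have "\<dots> \<le> 1/100" using a by simp
    finally show ?thesis using x2 by simp
  qed
  define K where "K = t0 / t1 * M"
  define al where "al = t0 / t1 * t2 / t1"
  have Kup: "K \<le> 51/50"
  proof -
    have "K = M * t0 / t1" by (simp add: K_def)
    also have "\<dots> \<le> x0 + D * (M - 1) / (3 * x0)" using Kup0 t1p by (simp add: divide_le_eq mult.commute)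
    finally show ?thesis using f_le by simp
  qed
  have Klo: "x0 \<le> K"
  proof -
    have "x0 * t1 \<le> M * t0" using e0' Dt2 by linarith
    then show ?thesis using t1p by (simp add: K_def field_simps)
  qed
  have al_K: "al = K * (t2 / t1) / M" using M t1p by (simp add: K_def al_def field_simps)
  have Kp: "K > 0" using Klo x0p by simp
  have al_up: "al \<le> 7/20"
  proof -
    have "t2 / t1 \<le> (M - 1) / (3 * x0)" using t2b t1p by (simp add: field_simps)
    also have "\<dots> \<le> (M - 1) / 3" using x1 M by (intro divide_left_mono) simp_all
    also have "\<dots> \<le> M / 3" by simp
    finally have r: "t2 / t1 \<le> M / 3" .
    have "al \<le> K * (M / 3) / M" unfolding al_K using r Kp M
      by (intro divide_right_mono mult_left_mono) simp_all
    also have "\<dots> = K / 3" using M by simp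
    finally show ?thesis using Kup by simp
  qed
  have al_lo: "6/25 \<le> al"
  proof -
    have "D * t3 \<le> D * (M * t2 / (5 * x0))"
      using b2 D0 x0p by (intro mult_left_mono) (simp_all add: field_simps)
    also have "\<dots> = (M * D) * t2 / (5 * x0)" by simp
    also have "\<dots> \<le> (3/100) * t2 / (5 * x0)"
      using xm t2 x0p by (intro divide_right_mono mult_right_mono) (simp_all add: D_def)
    also have "\<dots> \<le> (3/100) * t2 / 5"
      using t2 x1 by (intro divide_left_mono) simp_all
    finally have "D * t3 \<le> (3/500) * t2" by simp
    then have "(M - 1) * t1 \<le> t2 * (3 * x0 + 3/500)" using e1' by (simp add: algebra_simps)
    moreover have "(3/4) * M * t1 \<le> (M - 1) * t1"
    proof -
      have "4 * t1 \<le> M * t1" using M t1p by (intro mult_right_mono) simp_all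
      then show ?thesis by (simp add: algebra_simps)
    qed
    ultimately have A: "(3/4) * M * t1 \<le> t2 * (3 * x0 + 3/500)" by simp
    have "(3/4) * K = t0 / t1 / t1 * ((3/4) * M * t1)" using t1p by (simp add: K_def field_simps)
    also have "\<dots> \<le> t0 / t1 / t1 * (t2 * (3 * x0 + 3/500))"
      using A t1p t0 by (intro mult_left_mono) simp_all
    also have "\<dots> = al * (3 * x0 + 3/500)" by (simp add: al_def)
    finally have B: "(3/4) * x0 \<le> al * (3 * x0 + 3/500)" using Klo by simp
    show ?thesis
    proof (rule ccontr)
      assume "\<not> 6/25 \<le> al"
      then have "al * (3 * x0 + 3/500) < 6/25 * (3 * x0 + 3/500)"
        using x0p by (intro mult_strict_right_mono) simp_all
      then show False using B x1 by simp
    qed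
  qed
  have c3: "(t0/t1)^3 * t3 / (6 * t0) \<le> 3/20 * al^2"
  proof -
    have "t3 \<le> M * t2 / 5"
    proof -
      have "5 * t3 \<le> 5 * x0 * t3" using x1 t3 by (simp add: mult_right_mono)
      then show ?thesis using b2 by simp
    qed
    then have "(t0/t1)^3 * t3 / (6 * t0) \<le> (t0/t1)^3 * (M * t2 / 5) / (6 * t0)"
      using t0 t1p by (intro divide_right_mono mult_left_mono) simp_all
    also have "\<dots> = K * al / 30" using t0 t1p by (simp add: K_def al_def field_simps power3_eq_cube)
    also have "\<dots> \<le> (51/50) * al / 30" using Kup al_lo by (intro divide_right_mono mult_right_mono) simp_all
    also have "\<dots> \<le> 3/20 * al^2"
    proof -
      have "(51/50) * al / 30 = al * (17/500)" by simp
      also have "\<dots> \<le> al * (3/20 * al)" using al_lo by (intro mult_left_mono) simp_all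
      finally show ?thesis by (simp add: power2_eq_square)
    qed
    finally show ?thesis .
  qed
  show ?thesis using t1p Klo Kup al_lo al_up c3 by (simp add: K_def al_def)
qed

lemma poly_ineq:
  fixes u :: real
  assumes "0 \<le> u" "u \<le> 27/50"
  shows "(1+u)^2 * (1 - u + 3/5*u^2) * (1 + u * (1 - u + 3/5*u^2)) \<le> 1 + 2*u"
proof -
  define g where "g = 2/5 + 3/5*u - 9/5*u^2 - 4/25*u^3 + 12/25*u^4 - 9/25*u^5"
  have id: "1 + 2*u - (1+u)^2 * (1 - u + 3/5*u^2) * (1 + u * (1 - u + 3/5*u^2)) = u^2 * g"
    by (simp add: g_def eval_nat_numeral field_simps)
  have u2: "u^2 \<le> (27/50) * u"
  proof -
    have "u * u \<le> (27/50) * u" using assms by (intro mult_right_mono) simp_all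
    then show ?thesis by (simp add: power2_eq_square)
  qed
  have u3: "u^3 \<le> (27/50)^2 * u"
  proof -
    have "u^3 = u^2 * u" by (simp add: power3_eq_cube power2_eq_square)
    also have "\<dots> \<le> ((27/50) * u) * u" using u2 assms by (intro mult_right_mono) simp_all
    also have "\<dots> = (27/50) * u^2" by (simp add: power2_eq_square)
    also have "\<dots> \<le> (27/50) * ((27/50) * u)" using u2 by (intro mult_left_mono) simp_all
    finally show ?thesis by (simp add: power2_eq_square)
  qed
  have u5: "u^5 \<le> (27/50)^4 * u"
  proof -
    have "u^4 \<le> (27/50)^4" using assms by (intro power_mono) simp_all
    then have "u^4 * u \<le> (27/50)^4 * u" using assms by (intro mult_right_mono) simp_all
    then show ?thesis by (simp add: power_Suc2[symmetric] del: power_Suc)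
  qed
  have u4: "u^4 \<ge> 0" using assms by simp
  have u3': "u^3 \<le> 729/2500 * u" using u3 by (simp add: power2_eq_square)
  have u5': "u^5 \<le> 531441/6250000 * u" using u5 by (simp add: power_numeral_reduce)
  have "g \<ge> 0" unfolding g_def using u2 u3' u5' u4 assms by linarith
  then have "u^2 * g \<ge> 0" by simp
  then show ?thesis using id by linarith
qed

lemma final_ineq:
  fixes al w p :: real
  assumes al1: "6/25 \<le> al" and al2: "al \<le> 7/20" and w: "w > 0" and p0: "0 \<le> p" and p2: "p \<le> 2"
    and small: "w * (1 - al) < 2 \<Longrightarrow> p \<le> w - al/2 * w^2 + 3/20 * al^2 * w^3"
  shows "(1 + al * w / 2) * p * (1 + al * p / 2) \<le> (1 + al) * w"
proof (cases "w * (1 - al) < 2")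
  case False
  have "(1 + al * w / 2) * p * (1 + al * p / 2) \<le> (1 + al * w / 2) * 2 * (1 + al * 2 / 2)"
    using p0 p2 al1 w by (intro mult_mono) (simp_all add: mult_left_mono)
  also have "\<dots> = (2 + al * w) * (1 + al)" by (simp add: algebra_simps)
  also have "\<dots> \<le> w * (1 + al)" using False al1 by (intro mult_right_mono) (simp_all add: algebra_simps)
  finally show ?thesis by (simp add: mult.commute)
next
  case True
  define u where "u = al * w / 2"
  define r where "r = 1 - u + 3/5*u^2"
  have u0: "u \<ge> 0" using al1 w by (simp add: u_def)
  have ual: "u * (1 - al) < al" using True al1 by (simp add: u_def)
  have u1: "u \<le> 27/50"
  proof (rule ccontr)
    assume "\<not> u \<le> 27/50"
    then have "27/50 * (1 - al) < u * (1 - al)" using al2 by (intro mult_strict_right_mono) simp_all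
    then show False using ual al2 by simp
  qed
  have rpos: "r \<ge> 0"
  proof -
    have "u^2 \<le> u" using u0 u1 by (simp add: power2_eq_square mult_left_le_one_le)
    then show ?thesis using u1 u0 by (simp add: r_def)
  qed
  have pb: "p \<le> w * r"
  proof -
    have "p \<le> w - al/2 * w^2 + 3/20 * al^2 * w^3" using small True by simp
    also have "\<dots> = w * r" by (simp add: r_def u_def algebra_simps power2_eq_square power3_eq_cube)
    finally show ?thesis .
  qed
  have "(1 + al * w / 2) * p * (1 + al * p / 2) \<le> (1 + u) * (w * r) * (1 + u * r)"
  proof (intro mult_mono)
    show "1 + al * w / 2 \<le> 1 + u" by (simp add: u_def)
    show "p \<le> w * r" by (rule pb)
    show "1 + al * p / 2 \<le> 1 + u * r"
    proof -
      have "al * p / 2 \<le> al * (w * r) / 2" using pb al1 by (simp add: mult_left_mono)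
      then show ?thesis by (simp add: u_def)
    qed
  qed (use u0 p0 al1 rpos w in auto)
  also have "\<dots> = w * ((1 + u) * r * (1 + u * r))" by (simp add: algebra_simps)
  also have "\<dots> \<le> w * (1 + al)"
  proof (intro mult_left_mono)
    have A: "(1+u)^2 * r * (1 + u * r) \<le> 1 + 2*u" using poly_ineq[OF u0 u1] by (simp add: r_def)
    have B: "1 + 2*u \<le> (1 + al) * (1 + u)" using ual by (simp add: algebra_simps)
    have "(1 + u) * ((1 + u) * r * (1 + u * r)) \<le> (1 + u) * (1 + al)"
      using A B by (simp add: power2_eq_square algebra_simps)
    then show "(1 + u) * r * (1 + u * r) \<le> 1 + al" using u0 by (simp add: mult_le_cancel_left_pos)
  qed (use w in simp)
  finally show ?thesis by (simp add: mult.commute)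
qed

lemma key_bound:
  fixes m :: nat and eps :: real
  assumes m2: "m \<ge> 2" and e0: "0 \<le> eps" and e1: "eps \<le> 1/100"
  shows "rkc_omega0 m eps \<ge> 1 \<and> rkc_omega1 m eps > 0 \<and> chebd m 1 (rkc_omega0 m eps) > 0
    \<and> 6/25 \<le> rkc_alpha m eps \<and> rkc_alpha m eps \<le> 7/20
    \<and> (\<forall>w. 0 \<le> w \<and> w \<le> rkc_ell m eps \<longrightarrow>
          0 \<le> rkc_Phi m eps (-w) \<and>
          (1 + rkc_alpha m eps * w / 2) * rkc_Phi m eps (-w) * (1 + rkc_alpha m eps * w * rkc_Phi m eps (-w) / 2)
             \<le> 1 + rkc_alpha m eps)"
proof -
  define x0 where "x0 = rkc_omega0 m eps"
  define M where "M = real m ^ 2"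
  define t where "t = (\<lambda>k. chebd m k x0)"
  have M4: "M \<ge> 4"
  proof -
    have "real m \<ge> 2" using m2 by simp
    then have "(2::real)^2 \<le> real m ^ 2" by (intro power_mono) simp_all
    then show ?thesis by (simp add: M_def)
  qed
  have x0def: "x0 = 1 + eps / M" by (simp add: x0_def rkc_omega0_def M_def)
  have Mp: "M > 0" using M4 by simp
  have x1: "1 \<le> x0" using e0 Mp by (simp add: x0def)
  have eM: "eps / M \<le> 1/400"
  proof -
    have "eps / M \<le> eps / 4" using e0 M4 by (intro divide_left_mono) simp_all
    also have "\<dots> \<le> 1/400" using e1 by simp
    finally show ?thesis .
  qed
  have x2: "x0 \<le> 1 + 1/400" using eM by (simp add: x0def)
  have xm: "M * (x0^2 - 1) \<le> 3/100"
  proof -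
    have "M * (x0^2 - 1) = eps * (2 + eps / M)" using Mp by (simp add: x0def power2_eq_square field_simps)
    also have "\<dots> \<le> (1/100) * (2 + 1/400)" using e0 e1 eM Mp by (intro mult_mono) simp_all
    finally show ?thesis by simp
  qed
  have tnn: "t k \<ge> 0" for k using chebd_nonneg[OF x1] by (simp add: t_def)
  have t0: "t 0 \<ge> 1" using cheb_x0_pos[OF x1, of m] by (simp add: t_def chebd_0)
  have ode: "(1 - x0^2) * t (k+2) - real (2*k+1) * x0 * t (k+1) + (M - real k ^ 2) * t k = 0" for k
    using chebd_ode[of x0 m k] by (simp add: t_def M_def)
  have o0: "(1 - x0^2) * t 2 - x0 * t 1 + M * t 0 = 0" using ode[of 0] by (simp add: eval_nat_numeral)
  have o1: "(1 - x0^2) * t 3 - 3 * x0 * t 2 + (M - 1) * t 1 = 0" using ode[of 1] by (simp add: eval_nat_numeral)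
  have o2: "(1 - x0^2) * t 4 - 5 * x0 * t 3 + (M - 4) * t 2 = 0" using ode[of 2] by (simp add: eval_nat_numeral)
  note CB = consts_bounds[OF M4 x1 x2 xm t0 tnn[of 2] tnn[of 3] tnn[of 4] o0 o1 o2]
  have t1p: "t 1 > 0" using CB by simp
  have dd: "deriv (cheb_T m) x0 = chebd m 1 x0" by (simp only: chebd_1)
  have w1eq: "rkc_omega1 m eps = t 0 / t 1"
    unfolding rkc_omega1_def x0_def[symmetric] dd by (simp add: t_def chebd_0)
  have w1p: "rkc_omega1 m eps > 0" using w1eq t0 t1p by simp
  have aleq: "rkc_alpha m eps = t 0 / t 1 * t 2 / t 1"
    unfolding rkc_alpha_eq rkc_b_def x0_def[symmetric] w1eq using t0
    by (simp add: t_def chebd_0 power2_eq_square field_simps)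
  define al where "al = rkc_alpha m eps"
  have al1: "6/25 \<le> al" and al2: "al \<le> 7/20" using CB by (simp_all add: al_def aleq)
  have Kb: "rkc_omega1 m eps * real m ^ 2 \<le> 51/50" using CB by (simp add: w1eq M_def)
  have c3b: "rkc_omega1 m eps ^ 3 * chebd m 3 x0 / (6 * cheb_T m x0) \<le> 3/20 * al^2"
    using CB by (simp add: w1eq al_def aleq t_def chebd_0[symmetric])
  have main: "0 \<le> rkc_Phi m eps (-w) \<and>
          (1 + al * w / 2) * rkc_Phi m eps (-w) * (1 + al * w * rkc_Phi m eps (-w) / 2) \<le> 1 + al"
    if w0: "0 \<le> w" and wl: "w \<le> rkc_ell m eps" for w
  proof (cases "w = 0")
    case True
    then show ?thesis using Phi_zero[of m eps] x1 t1p al1 by (simp add: x0_def t_def)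
  next
    case False
    then have wp: "w > 0" using w0 by simp
    define F where "F = rkc_Phi m eps (-w)"
    define p where "p = 1 - rkc_P m eps (-w)"
    have Fp: "F = p / w" using Phi_rel[of m eps "-w"] x1 wp by (simp add: F_def p_def x0_def field_simps)
    have Pb: "\<bar>rkc_P m eps (-w)\<bar> \<le> 1"
    proof -
      have ww: "rkc_omega1 m eps * w \<le> 2 * x0"
        using wl w1p by (simp add: rkc_ell_def x0_def field_simps)
      have "\<bar>x0 + rkc_omega1 m eps * (-w)\<bar> \<le> x0" using ww w1p w0 x1 by (simp add: abs_le_iff)
      then have "\<bar>cheb_T m (x0 + rkc_omega1 m eps * (-w))\<bar> \<le> cheb_T m x0" by (rule cheb_bound[OF x1])
      moreover have "cheb_T m x0 \<ge> 1" using cheb_x0_pos[OF x1] by simp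
      ultimately show ?thesis by (simp add: rkc_P_def rkc_b_def x0_def abs_mult divide_le_eq_1)
    qed
    have p0: "0 \<le> p" and p2: "p \<le> 2" using Pb by (simp_all add: p_def abs_le_iff)
    have small: "p \<le> w - al/2 * w^2 + 3/20 * al^2 * w^3" if "w * (1 - al) < 2"
    proof -
      have "w * (13/20) \<le> w * (1 - al)" using al2 wp by (intro mult_left_mono) simp_all
      then have w40: "w \<le> 40" using that by simp
      have "p \<le> w - al / 2 * w^2 + rkc_omega1 m eps ^ 3 * chebd m 3 x0 / (6 * cheb_T m x0) * w^3"
        using P_small_bound[of m eps w] x1 t1p Kb w0 w40 by (simp add: p_def al_def x0_def t_def)
      also have "\<dots> \<le> w - al / 2 * w^2 + 3/20 * al^2 * w^3"
      proof -
        have "rkc_omega1 m eps ^ 3 * chebd m 3 x0 / (6 * cheb_T m x0) * w^3 \<le> 3/20 * al^2 * w^3"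
          using w0 by (intro mult_right_mono[OF c3b]) simp
        then show ?thesis by linarith
      qed
      finally show ?thesis .
    qed
    have FI: "(1 + al * w / 2) * p * (1 + al * p / 2) \<le> (1 + al) * w"
      by (rule final_ineq[OF al1 al2 wp p0 p2 small])
    have "(1 + al * w / 2) * F * (1 + al * w * F / 2) = ((1 + al * w / 2) * p * (1 + al * p / 2)) / w"
      unfolding Fp using wp by (simp add: field_simps)
    also have "\<dots> \<le> ((1 + al) * w) / w" using FI wp by (intro divide_right_mono) simp_all
    also have "\<dots> = 1 + al" using wp by simp
    finally show ?thesis using Fp p0 wp by (simp add: F_def)
  qed
  show ?thesis using x1 w1p t1p al1 al2 main by (simp add: x0_def t_def al_def)
qed

theorem theorem4p3:
  fixes m :: nat
  assumes "m \<ge> 2"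
  shows "\<exists>epsbar > 0. \<forall>eps. 0 \<le> eps \<and> eps \<le> epsbar \<longrightarrow>
    (\<forall>(lam::real) (zeta::real) (s::nat) (beta::real) (R::real poly) (tau::real) (eta::real).
       lam \<le> 0 \<longrightarrow> zeta < 0 \<longrightarrow> s \<ge> 1 \<longrightarrow> beta > 0 \<longrightarrow>
       (\<forall>z \<in> {- (beta * (real s)^2) .. 0}. \<bar>poly R z\<bar> \<le> 1) \<longrightarrow>
       tau > 0 \<longrightarrow> eta > 0 \<longrightarrow>
       (1 + rkc_alpha m eps) * tau * \<bar>zeta\<bar> \<le> beta * (real s)^2 \<longrightarrow>
       eta * \<bar>lam\<bar> \<le> rkc_ell m eps \<longrightarrow>
       eta \<ge> 2 * tau * (1 + rkc_alpha m eps) / (rkc_alpha m eps * (beta * (real s)^2)) \<longrightarrow>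
       (\<forall>y. fbar2 m eps eta (\<lambda>u. lam * u) (\<lambda>u. zeta * u) y
              = fbar2 m eps eta (\<lambda>u. lam * u) (\<lambda>u. zeta * u) 1 * y)
       \<and> \<bar>poly R (tau * fbar2 m eps eta (\<lambda>u. lam * u) (\<lambda>u. zeta * u) 1)\<bar> \<le> 1)"
proof (rule exI[of _ "1/100"], rule conjI, simp, intro allI impI)
  fix eps lam zeta :: real and s :: nat and beta :: real and R :: "real poly" and tau eta :: real
  assume eps: "0 \<le> eps \<and> eps \<le> 1/100"
    and lam: "lam \<le> 0" and zeta: "zeta < 0" and s1: "s \<ge> 1" and beta: "beta > 0"
    and Rb: "\<forall>z \<in> {- (beta * (real s)^2) .. 0}. \<bar>poly R z\<bar> \<le> 1"
    and tau: "tau > 0" and eta: "eta > 0"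
    and h1: "(1 + rkc_alpha m eps) * tau * \<bar>zeta\<bar> \<le> beta * (real s)^2"
    and h2: "eta * \<bar>lam\<bar> \<le> rkc_ell m eps"
    and h3: "eta \<ge> 2 * tau * (1 + rkc_alpha m eps) / (rkc_alpha m eps * (beta * (real s)^2))"
  note KB = key_bound[OF assms, of eps] eps
  have x1: "rkc_omega0 m eps \<ge> 1" using KB by simp
  define al where "al = rkc_alpha m eps"
  define L where "L = beta * (real s)^2"
  define w where "w = eta * \<bar>lam\<bar>"
  define F where "F = rkc_Phi m eps (-w)"
  have al1: "6/25 \<le> al" and al2: "al \<le> 7/20" using KB by (simp_all add: al_def)
  have Lp: "L > 0" using beta s1 by (simp add: L_def)
  have w0: "0 \<le> w" using eta by (simp add: w_def)
  have wl: "w \<le> rkc_ell m eps" using h2 by (simp add: w_def)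
  have FF: "0 \<le> F" "(1 + al * w / 2) * F * (1 + al * w * F / 2) \<le> 1 + al"
    using KB w0 wl by (simp_all add: F_def al_def)
  have etalam: "eta * lam = -w" using lam by (simp add: w_def)
  define G where "G = F * (1 + al * w * F / 2)"
  have Gnn: "G \<ge> 0" using FF al1 w0 by (simp add: G_def)
  have fb: "fbar2 m eps eta (\<lambda>u. lam * u) (\<lambda>u. zeta * u) y = y * ((lam + zeta) * G)" for y
  proof -
    have "fbar2 m eps eta (\<lambda>u. lam * u) (\<lambda>u. zeta * u) y
       = y * ((lam + zeta) * rkc_Phi m eps (eta * lam) * (1 - rkc_alpha m eps * eta * lam * rkc_Phi m eps (eta * lam) / 2))"
      using fbar2_closed[OF x1, of eta lam zeta y] eta by simp
    also have "\<dots> = y * ((lam + zeta) * G)"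
    proof -
      have "rkc_alpha m eps * eta * lam = - (al * w)" using etalam by (simp add: al_def mult.assoc)
      then show ?thesis unfolding etalam by (simp add: G_def F_def)
    qed
    finally show ?thesis .
  qed
  have conj1: "\<forall>y. fbar2 m eps eta (\<lambda>u. lam * u) (\<lambda>u. zeta * u) y
              = fbar2 m eps eta (\<lambda>u. lam * u) (\<lambda>u. zeta * u) 1 * y"
    using fb by simp
  define v where "v = tau * fbar2 m eps eta (\<lambda>u. lam * u) (\<lambda>u. zeta * u) 1"
  have v: "v = - (tau * (\<bar>lam\<bar> + \<bar>zeta\<bar>) * G)" using fb[of 1] lam zeta by (simp add: v_def algebra_simps)
  have v0: "v \<le> 0" unfolding v using tau Gnn by simp
  have vL: "- L \<le> v"
  proof -
    have A: "(1 + al) * tau * \<bar>zeta\<bar> \<le> L" using h1 by (simp add: al_def L_def)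
    have B: "2 * tau * (1 + al) \<le> eta * (al * L)"
    proof -
      have "2 * tau * (1 + al) / (al * L) \<le> eta" using h3 by (simp add: al_def L_def)
      moreover have "al * L > 0" using al1 Lp by simp
      ultimately show ?thesis by (simp add: divide_le_eq mult.commute)
    qed
    have C: "(1 + al) * tau * \<bar>lam\<bar> \<le> al * L * w / 2"
    proof -
      have "2 * tau * (1 + al) * \<bar>lam\<bar> \<le> eta * (al * L) * \<bar>lam\<bar>" using B by (simp add: mult_right_mono)
      then show ?thesis by (simp add: w_def algebra_simps)
    qed
    have "(1 + al) * (tau * (\<bar>lam\<bar> + \<bar>zeta\<bar>)) \<le> L * (1 + al * w / 2)"
      using A C by (simp add: algebra_simps)
    then have "(1 + al) * (tau * (\<bar>lam\<bar> + \<bar>zeta\<bar>)) * G \<le> L * (1 + al * w / 2) * G"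
      using Gnn by (rule mult_right_mono)
    also have "\<dots> = L * ((1 + al * w / 2) * F * (1 + al * w * F / 2))" by (simp add: G_def)
    also have "\<dots> \<le> L * (1 + al)" using FF Lp by (intro mult_left_mono) simp_all
    finally have "(1 + al) * (tau * (\<bar>lam\<bar> + \<bar>zeta\<bar>) * G) \<le> (1 + al) * L" by (simp add: algebra_simps)
    then have "tau * (\<bar>lam\<bar> + \<bar>zeta\<bar>) * G \<le> L" using al1 by (simp add: mult_le_cancel_left_pos)
    then show ?thesis unfolding v by simp
  qed
  have "\<bar>poly R (tau * fbar2 m eps eta (\<lambda>u. lam * u) (\<lambda>u. zeta * u) 1)\<bar> \<le> 1"
    using Rb v0 vL by (simp add: v_def L_def)
  then show "(\<forall>y. fbar2 m eps eta (\<lambda>u. lam * u) (\<lambda>u. zeta * u) y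
              = fbar2 m eps eta (\<lambda>u. lam * u) (\<lambda>u. zeta * u) 1 * y)
       \<and> \<bar>poly R (tau * fbar2 m eps eta (\<lambda>u. lam * u) (\<lambda>u. zeta * u) 1)\<bar> \<le> 1"
    using conj1 by blast
qed

end
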